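(* Let $p\geq 2$ be an even integer and let $U_p=\bigcup_{n\in 2\mathbb Z_+}\mathbb Z_p^n$. Let $\boldsymbol a,\boldsymbol b\in U_p$ be equivalent (in the sense defined in the context). Then $\mu_p(\boldsymbol a)=\mu_p(\boldsymbol b)$.
   Context: $\mathbb Z_+$ denotes the positive integers and $\mathbb Z_p=\mathbb Z/p\mathbb Z$. Two elements of $U_p$ are called equivalent if they are related by a finite sequence of the following transformations of $(a_1,\ldots,a_n)\in\mathbb Z_p^n$ ($n$ even): (Op1) $(a_1,\ldots,a_n)\to(a_2,\ldots,a_n,a_1)$; (Op2) $(a_1,\ldots,a_n)\to(a, a_2+(-1)^2(a_1-a),\ldots,a_i+(-1)^i(a_1-a),\ldots,a_n+(-1)^n(a_1-a))$ for any $a\in\mathbb Z_p$; (Op3) $(a_1,\ldots,a_n)\to(a, a_1-a_2+a,\ldots,a_1-a_i+a,\ldots,a_1-a_n+a)$ for any $a\in\mathbb Z_p$; (Op4) $(a_1,\ldots,a_n)\to(a_1,-a_1+a_2+a_3,a_3,\ldots,a_n)$ when $n>3$. For $p$ even, parity of elements of $\mathbb Z_p$ is well defined. For a tuple $(b_1,\ldots,b_n)$ of elements of $\mathbb Z_p$, let $E(b_1,\ldots,b_n)=\#\{i\in\{1,\ldots,n\}: b_i\equiv 0\pmod 2\}$ and $O(b_1,\ldots,b_n)=\#\{i: b_i\equiv 1\pmod 2\}$. Define $\mu_p:U_p\to\mathbb Z$ by $\mu_p(a_1,\ldots,a_n)=E(a_1+a_2,a_2+a_3,\ldots,a_n+a_1)-O(a_1+a_2,a_2+a_3,\ldots,a_n+a_1)$.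 *)

theory Defs
  imports Main
begin

text \<open>Elements of Z_p are represented by integers in {0..<p}; a tuple in Z_p^n
  is a list of length n with entries in {0..<p}. Indices in lists are 0-based,
  so list position i corresponds to the paper's index i+1.\<close>

definition U :: "nat \<Rightarrow> int list set" where
  "U p = {xs. length xs > 0 \<and> even (length xs) \<and> set xs \<subseteq> {0..<int p}}"

definition op1 :: "int list \<Rightarrow> int list" where
  "op1 xs = rotate1 xs"

definition op2 :: "nat \<Rightarrow> int \<Rightarrow> int list \<Rightarrow> int list" where
  "op2 p a xs = a # map (\<lambda>i. (xs ! i + (-1) ^ (i + 1) * (xs ! 0 - a)) mod int p)
                         [1..<length xs]"

definition op3 :: "nat \<Rightarrow> int \<Rightarrow> int list \<Rightarrow> int list" where
  "op3 p a xs = a # map (\<lambda>i. (xs ! 0 - xs ! i + a) mod int p) [1..<length xs]"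

definition op4 :: "nat \<Rightarrow> int list \<Rightarrow> int list" where
  "op4 p xs = xs[1 := (- (xs ! 0) + xs ! 1 + xs ! 2) mod int p]"

definition step :: "nat \<Rightarrow> int list \<Rightarrow> int list \<Rightarrow> bool" where
  "step p xs ys \<longleftrightarrow> xs \<in> U p \<and>
     (ys = op1 xs
      \<or> (\<exists>a\<in>{0..<int p}. ys = op2 p a xs \<or> ys = op3 p a xs)
      \<or> (length xs > 3 \<and> ys = op4 p xs))"

definition equivalent :: "nat \<Rightarrow> int list \<Rightarrow> int list \<Rightarrow> bool" where
  "equivalent p = (\<lambda>x y. step p x y \<or> step p y x)\<^sup>*\<^sup>*"

definition Ecount :: "nat \<Rightarrow> int list \<Rightarrow> nat" where
  "Ecount p bs = card {i. i < length bs \<and> even (bs ! i mod int p)}"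

definition Ocount :: "nat \<Rightarrow> int list \<Rightarrow> nat" where
  "Ocount p bs = card {i. i < length bs \<and> odd (bs ! i mod int p)}"

definition cyc_sums :: "nat \<Rightarrow> int list \<Rightarrow> int list" where
  "cyc_sums p xs = map (\<lambda>i. (xs ! i + xs ! ((i + 1) mod length xs)) mod int p)
                        [0..<length xs]"

definition mu :: "nat \<Rightarrow> int list \<Rightarrow> int" where
  "mu p xs = int (Ecount p (cyc_sums p xs)) - int (Ocount p (cyc_sums p xs))"

end

theory Submission
  imports Defs
begin

definition sg :: "int \<Rightarrow> int" where "sg x = (if even x then 1 else -1)"

lemma ev_iff: "even ((a::int) - b) = (even a = even b)"
  by (auto simp: even_diff even_add)

lemma sg_eq: "even ((a::int) - b) \<Longrightarrow> sg a = sg b"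
  by (simp add: sg_def ev_iff)

lemma sum_par: "even ((a::int) - b - c) \<Longrightarrow> even (a' - b' - c) \<Longrightarrow> even ((a + a') - (b + b'))"
proof -
  assume h: "even (a - b - c)" "even (a' - b' - c)"
  have "(a + a') - (b + b') = 2 * c + (a - b - c) + (a' - b' - c)" by simp
  then show ?thesis using h by (simp; blast)
qed

lemma even_mod_p: assumes "even p" shows "even (x mod int p) = even x"
proof -
  have "int p dvd x - x mod int p" by (simp add: mod_eq_dvd_iff)
  moreover have "2 dvd int p" using assms by simp
  ultimately have "2 dvd x - x mod int p" using dvd_trans by blast
  then show ?thesis by (simp add: ev_iff)
qed

lemma mu_sum:
  assumes "even p"
  shows "mu p xs = (\<Sum>i<length xs. sg (xs!i + xs!((i+1) mod length xs)))"
proof -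
  define n where "n = length xs"
  define c where "c i = xs!i + xs!((i+1) mod n)" for i
  have len: "length (cyc_sums p xs) = n" by (simp add: cyc_sums_def n_def)
  have nth: "i < n \<Longrightarrow> even (cyc_sums p xs ! i mod int p) = even (c i)" for i
    using assms by (simp add: cyc_sums_def n_def c_def even_mod_p)
  have E: "Ecount p (cyc_sums p xs) = card ({..<n} \<inter> {i. even (c i)})"
    unfolding Ecount_def len by (rule arg_cong[where f=card]) (auto simp: nth)
  have O: "Ocount p (cyc_sums p xs) = card ({..<n} \<inter> - {i. even (c i)})"
    unfolding Ocount_def len by (rule arg_cong[where f=card]) (auto simp: nth)
  have "(\<Sum>i<n. sg (c i)) = (\<Sum>i<n. if even (c i) then 1 else -1)"
    by (simp add: sg_def)
  also have "\<dots> = int (card ({..<n} \<inter> {i. even (c i)})) - int (card ({..<n} \<inter> - {i. even (c i)}))"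
    by (simp add: sum.If_cases)
  finally show ?thesis unfolding mu_def E O by (simp add: c_def n_def)
qed

lemma mu_shift:
  assumes "even p" and "length ys = length xs"
    and "\<And>j. j < length xs \<Longrightarrow> even (ys!j - xs!j - c)"
  shows "mu p ys = mu p xs"
proof -
  have "sg (ys!i + ys!((i+1) mod length xs)) = sg (xs!i + xs!((i+1) mod length xs))"
    if "i < length xs" for i
  proof -
    have "length xs > 0" using that by linarith
    then have "(i+1) mod length xs < length xs" by simp
    then have "even (ys!((i+1) mod length xs) - xs!((i+1) mod length xs) - c)" using assms(3) by blast
    moreover have "even (ys!i - xs!i - c)" using assms(3) that by blast
    ultimately have "even ((ys!i + ys!((i+1) mod length xs)) - (xs!i + xs!((i+1) mod length xs)))"
      using sum_par by blast
    then show ?thesis by (rule sg_eq)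
  qed
  then show ?thesis using assms by (simp add: mu_sum)
qed

lemma mu_op1: assumes "even p" shows "mu p (op1 xs) = mu p xs"
proof (cases xs)
  case Nil then show ?thesis by (simp add: op1_def)
next
  case (Cons y ys)
  define n where "n = length xs"
  define g where "g i = sg (xs!i + xs!((i+1) mod n))" for i
  obtain m where m: "n = Suc m" using Cons n_def by auto
  have "mu p (op1 xs) = (\<Sum>i<n. sg (rotate1 xs ! i + rotate1 xs ! ((i+1) mod n)))"
    by (simp add: mu_sum[OF assms] op1_def n_def)
  also have "\<dots> = (\<Sum>i<n. g ((i+1) mod n))"
  proof (rule sum.cong[OF refl])
    fix i assume i: "i \<in> {..<n}"
    then have i': "i < n" by (simp add: n_def)
    have a: "rotate1 xs ! i = xs ! ((i+1) mod n)" using i' by (simp add: n_def nth_rotate1)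
    have "n > 0" using i' by linarith
    then have "(i+1) mod n < n" by simp
    then have b: "rotate1 xs ! ((i+1) mod n) = xs ! (((i+1) mod n + 1) mod n)" by (simp add: n_def nth_rotate1)
    show "sg (rotate1 xs ! i + rotate1 xs ! ((i + 1) mod n)) = g ((i + 1) mod n)"
      unfolding g_def using a b by simp
  qed
  also have "\<dots> = (\<Sum>i<m. g ((i+1) mod n)) + g 0" by (simp add: m)
  also have "\<dots> = (\<Sum>i<m. g (Suc i)) + g 0" by (simp add: m)
  also have "\<dots> = (\<Sum>i<n. g i)" by (simp add: m sum.lessThan_Suc_shift del: sum.lessThan_Suc)
  also have "\<dots> = mu p xs" by (simp add: mu_sum[OF assms] g_def n_def)
  finally show ?thesis .
qed

lemma mu_op4: assumes "even p" and "length xs > 3" shows "mu p (op4 p xs) = mu p xs"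
proof -
  define n where "n = length xs"
  define ys where "ys = op4 p xs"
  define v where "v = (- (xs ! 0) + xs ! 1 + xs ! 2) mod int p"
  have ys: "ys = xs[1 := v]" by (simp add: ys_def op4_def v_def)
  have v: "even (v - (- (xs ! 0) + xs ! 1 + xs ! 2))"
    using even_mod_p[OF assms(1)] unfolding v_def by (simp add: ev_iff)
  obtain m where m: "n = Suc (Suc m)" and m2: "m \<ge> 2" using assms(2) n_def
    by (intro that[of "n - 2"]) (use assms(2) n_def in auto)
  have ln: "length ys = n" by (simp add: ys n_def)
  define g where "g zs i = sg (zs!i + zs!((i+1) mod n))" for zs i
  have split: "(\<Sum>i<n. g zs i) = g zs 0 + g zs 1 + (\<Sum>i<m. g zs (Suc (Suc i)))" for zs
    by (simp add: m sum.lessThan_Suc_shift del: sum.lessThan_Suc)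
  have rest: "g ys (Suc (Suc i)) = g xs (Suc (Suc i))" if "i < m" for i
  proof -
    have "(Suc (Suc i) + 1) mod n \<noteq> 1"
      using that m m2 by (cases "Suc (Suc (Suc i)) = n") auto
    then show ?thesis unfolding g_def ys by simp
  qed
  have g0: "g ys 0 = g xs 1"
  proof -
    have "ys!0 = xs!0" "ys!1 = v" using m n_def by (auto simp: ys)
    moreover have "(0+1) mod n = 1" "(1+1) mod n = 2" using m m2 by auto
    moreover have "even ((xs!0 + v) - (xs!1 + xs!2))" using v
    proof - have e: "(xs!0 + v) - (xs!1 + xs!2) = v - (- (xs ! 0) + xs ! 1 + xs ! 2)" by simp show ?thesis unfolding e by (rule v) qed
    ultimately show ?thesis unfolding g_def by - (rule sg_eq, simp)
  qed
  have g1: "g ys 1 = g xs 0"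
  proof -
    have "ys!2 = xs!2" "ys!1 = v" using m m2 n_def by (auto simp: ys)
    moreover have "(0+1) mod n = 1" "(1+1) mod n = 2" using m m2 by auto
    moreover have "even ((v + xs!2) - (xs!0 + xs!1))" using v
    proof -
      have e: "(v + xs!2) - (xs!0 + xs!1) = (v - (- (xs ! 0) + xs ! 1 + xs ! 2)) + 2 * (xs!2 - xs!0)"
        by simp
      have "even (2 * (xs!2 - xs!0))" by simp
      then show ?thesis unfolding e using v by (rule_tac dvd_add) auto
    qed
    ultimately show ?thesis unfolding g_def by - (rule sg_eq, simp)
  qed
  have "mu p ys = (\<Sum>i<n. g ys i)" using mu_sum[OF assms(1), of ys] ln by (simp add: g_def)
  also have "\<dots> = (\<Sum>i<n. g xs i)" unfolding split using g0 g1 rest by simp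
  also have "\<dots> = mu p xs" using mu_sum[OF assms(1), of xs] by (simp add: g_def n_def)
  finally show ?thesis by (simp add: ys_def)
qed

lemma mu_step: assumes "even p" and "step p xs ys" shows "mu p xs = mu p ys"
proof -
  consider "ys = op1 xs" | a where "ys = op2 p a xs" | a where "ys = op3 p a xs"
    | "length xs > 3" "ys = op4 p xs"
    using assms(2) unfolding step_def by blast
  then show ?thesis
  proof cases
    case 1 then show ?thesis using mu_op1[OF assms(1)] by simp
  next
    case (2 a)
    show ?thesis
    proof (rule sym, rule mu_shift[OF assms(1), where c = "a - xs!0"])
      show "length ys = length xs" using 2 assms(2)
        by (auto simp: op2_def step_def U_def)
      fix j assume j: "j < length xs"
      show "even (ys!j - xs!j - (a - xs!0))"
      proof (cases j)
        case 0 then show ?thesis using 2 by (simp add: op2_def)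
      next
        case (Suc k)
        define f where "f i = (xs ! i + (-1) ^ (i + 1) * (xs ! 0 - a)) mod int p" for i
        have "ys!j = map f [1..<length xs] ! k" using 2 Suc unfolding op2_def f_def by simp
        also have "\<dots> = f (Suc k)" using j Suc by simp
        finally have "ys!j = (xs ! j + (-1) ^ (j + 1) * (xs ! 0 - a)) mod int p"
          using Suc by (simp add: f_def)
        then have "even (ys!j - (xs ! j + (-1) ^ (j + 1) * (xs ! 0 - a)))"
          using even_mod_p[OF assms(1)] by (simp add: ev_iff)
        moreover have "even ((-1::int) ^ (j + 1) * (xs ! 0 - a) - (xs!0 - a))"
          by (cases "even (j+1)") auto
        moreover have "ys!j - xs!j - (a - xs!0) = (ys!j - (xs ! j + (-1) ^ (j + 1) * (xs ! 0 - a))) + ((-1::int) ^ (j + 1) * (xs ! 0 - a) - (xs!0 - a)) + 2 * (xs!0 - a)" by simp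
        ultimately show ?thesis by (simp; blast)
      qed
    qed
  next
    case (3 a)
    show ?thesis
    proof (rule sym, rule mu_shift[OF assms(1), where c = "a + xs!0"])
      show "length ys = length xs" using 3 assms(2)
        by (auto simp: op3_def step_def U_def)
      fix j assume j: "j < length xs"
      show "even (ys!j - xs!j - (a + xs!0))"
      proof (cases j)
        case 0 then show ?thesis using 3 by (simp add: op3_def)
      next
        case (Suc k)
        define f where "f i = (xs ! 0 - xs ! i + a) mod int p" for i
        have "ys!j = map f [1..<length xs] ! k" using 3 Suc unfolding op3_def f_def by simp
        also have "\<dots> = f (Suc k)" using j Suc by simp
        finally have "ys!j = (xs ! 0 - xs ! j + a) mod int p"
          using Suc by (simp add: f_def)
        then have "even (ys!j - (xs ! 0 - xs ! j + a))"
          using even_mod_p[OF assms(1)] by (simp add: ev_iff)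
        moreover have "ys!j - xs!j - (a + xs!0) = (ys!j - (xs ! 0 - xs ! j + a)) - 2 * xs!j" by simp
        ultimately show ?thesis by (simp; blast)
      qed
    qed
  next
    case 4 then show ?thesis using mu_op4[OF assms(1)] by simp
  qed
qed

theorem mainTheorem3:
  fixes p :: nat and a b :: "int list"
  assumes "even p" and "p \<ge> 2"
    and "a \<in> U p" and "b \<in> U p"
    and "equivalent p a b"
  shows "mu p a = mu p b"
  using assms(5) unfolding equivalent_def
proof (induction rule: rtranclp_induct)
  case base then show ?case by simp
next
  case (step y z) then show ?case using mu_step[OF assms(1)] by auto
qed

end
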